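(* Consider equation (E). Assume there exist continuous non-decreasing functions $\sigma_1,\dots,\sigma_m:[t_0,\infty)\to\mathbb{R}$ such that $\tau_i(t)\le\sigma_i(t)\le t$ for all $t\ge t_0$ and $i=1,\dots,m$. For $t\ge t_0$ and $i,j\in\{1,\dots,m\}$ put $$I_{ij}(t)=\int_{\sigma_j(t)}^{t}p_i(s)\exp\Bigg(\int_{\tau_i(s)}^{\sigma_i(t)}\sum_{k=1}^{m}p_k(\xi)\exp\bigg(\int_{\tau_k(\xi)}^{\xi}\sum_{l=1}^{m}p_l(u)\,du\bigg)d\xi\Bigg)ds .$$ If $$\limsup_{t\to+\infty}\prod_{j=1}^{m}\Bigg[\prod_{i=1}^{m}I_{ij}(t)\Bigg]^{1/m}>\frac{1}{m^{m}},$$ then all solutions of (E) oscillate.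
   Context: Equation (E) is $x'(t)+\sum_{i=1}^{m}p_i(t)\,x(\tau_i(t))=0$, $t\ge t_0$, where $m\ge1$ is an integer and, for each $i$, $p_i,\tau_i:[t_0,\infty)\to[0,\infty)$ are continuous, $\tau_i(t)\le t$ for $t\ge t_0$, and $\lim_{t\to\infty}\tau_i(t)=\infty$. Let $\tau(t)=\min_i\tau_i(t)$ and $\tau_{(-1)}(t)=\sup\{s:\tau(s)\le t\}$. A solution of (E) is a function $x\in C([T_0,\infty);\mathbb{R})$ for some $T_0\ge t_0$ which is continuously differentiable on $[\tau_{(-1)}(T_0),\infty)$ and satisfies (E) for $t\ge\tau_{(-1)}(T_0)$. A solution is oscillatory if it has arbitrarily large zeros, and nonoscillatory otherwise; "all solutions oscillate" means every solution is oscillatory. *)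

theory Defs
  imports "HOL-Analysis.Analysis"
begin

definition oint :: "real \<Rightarrow> real \<Rightarrow> (real \<Rightarrow> real) \<Rightarrow> real" where
  "oint a b f = (if a \<le> b then integral {a..b} f else - integral {b..a} f)"

definition tau_min :: "nat \<Rightarrow> (nat \<Rightarrow> real \<Rightarrow> real) \<Rightarrow> real \<Rightarrow> real" where
  "tau_min m tau t = Min ((\<lambda>i. tau i t) ` {1..m})"

definition tau_inv :: "nat \<Rightarrow> real \<Rightarrow> (nat \<Rightarrow> real \<Rightarrow> real) \<Rightarrow> real \<Rightarrow> real" where
  "tau_inv m t0 tau T = Sup {s. s \<ge> t0 \<and> tau_min m tau s \<le> T}"

definition is_solution ::
  "nat \<Rightarrow> real \<Rightarrow> (nat \<Rightarrow> real \<Rightarrow> real) \<Rightarrow> (nat \<Rightarrow> real \<Rightarrow> real) \<Rightarrow> (real \<Rightarrow> real) \<Rightarrow> real \<Rightarrow> bool" where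
  "is_solution m t0 p tau x T0 \<longleftrightarrow>
     T0 \<ge> t0 \<and> continuous_on {T0..} x \<and>
     (\<exists>x'. continuous_on {tau_inv m t0 tau T0..} x' \<and>
        (\<forall>t \<ge> tau_inv m t0 tau T0.
            (x has_real_derivative x' t) (at t within {tau_inv m t0 tau T0..}) \<and>
            x' t + (\<Sum>i\<in>{1..m}. p i t * x (tau i t)) = 0))"

definition I_ij ::
  "nat \<Rightarrow> (nat \<Rightarrow> real \<Rightarrow> real) \<Rightarrow> (nat \<Rightarrow> real \<Rightarrow> real) \<Rightarrow> (nat \<Rightarrow> real \<Rightarrow> real) \<Rightarrow> nat \<Rightarrow> nat \<Rightarrow> real \<Rightarrow> real" where
  "I_ij m p tau sg i j t =
     oint (sg j t) t (\<lambda>s. p i s *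
       exp (oint (tau i s) (sg i t)
         (\<lambda>\<xi>. \<Sum>k\<in>{1..m}. p k \<xi> * exp (oint (tau k \<xi>) \<xi> (\<lambda>u. \<Sum>l\<in>{1..m}. p l u)))))"

definition oscillatory :: "(real \<Rightarrow> real) \<Rightarrow> bool" where
  "oscillatory x \<longleftrightarrow> (\<forall>T. \<exists>t\<ge>T. x t = 0)"

end

theory Submission imports Defs begin

lemma oint_diff:
  fixes f :: "real \<Rightarrow> real"
  assumes "continuous_on {c..} f" "a \<ge> c" "b \<ge> c"
  shows "oint a b f = integral {c..b} f - integral {c..a} f"
proof (cases "a \<le> b")
  case True
  have "integral {c..a} f + integral {a..b} f = integral {c..b} f"
    using assms True by (intro Henstock_Kurzweil_Integration.integral_combine integrable_continuous_interval continuous_on_subset[OF assms(1)]) auto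
  then show ?thesis using True by (simp add: oint_def)
next
  case False
  have "integral {c..b} f + integral {b..a} f = integral {c..a} f"
    using assms False by (intro Henstock_Kurzweil_Integration.integral_combine integrable_continuous_interval continuous_on_subset[OF assms(1)]) auto
  then show ?thesis using False by (simp add: oint_def)
qed

lemma indef_deriv:
  fixes f :: "real \<Rightarrow> real"
  assumes "continuous_on {c..} f" "u > c"
  shows "((\<lambda>v. integral {c..v} f) has_real_derivative f u) (at u)"
proof -
  have "((\<lambda>v. integral {c..v} f) has_real_derivative f u) (at u within {c..u+1})"
    by (rule integral_has_real_derivative) (use assms in \<open>auto intro: continuous_on_subset[OF assms(1)]\<close>)
  moreover have "at u within {c..u+1} = at u" using assms by (intro at_within_Icc_at) auto
  ultimately show ?thesis by simp
qed

lemma L_exp: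
  fixes x x' q :: "real \<Rightarrow> real"
  assumes "c < a" "a \<le> b"
    and d: "\<And>u. a \<le> u \<Longrightarrow> u \<le> b \<Longrightarrow> (x has_real_derivative x' u) (at u)"
    and le: "\<And>u. a \<le> u \<Longrightarrow> u \<le> b \<Longrightarrow> x' u \<le> - q u * x u"
    and qc: "continuous_on {c..} q"
  shows "x b * exp (integral {c..b} q - integral {c..a} q) \<le> x a"
proof -
  define Q where "Q = (\<lambda>v. integral {c..v} q)"
  have "x b * exp (Q b) \<le> x a * exp (Q a)"
  proof (rule DERIV_nonpos_imp_nonincreasing[OF assms(2)])
    fix u assume u: "a \<le> u" "u \<le> b"
    have dQ: "(Q has_real_derivative q u) (at u)" unfolding Q_def
      by (rule indef_deriv[OF qc]) (use u assms in auto)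
    have "((\<lambda>v. x v * exp (Q v)) has_real_derivative x' u * exp (Q u) + x u * (exp (Q u) * q u)) (at u)"
      using d[OF u] dQ by (auto intro!: derivative_eq_intros)
    moreover have "x' u * exp (Q u) + x u * (exp (Q u) * q u) = exp (Q u) * (x' u + q u * x u)"
      by (simp add: algebra_simps)
    moreover have "exp (Q u) * (x' u + q u * x u) \<le> 0"
      using le[OF u] by (intro mult_nonneg_nonpos) auto
    ultimately show "\<exists>y. ((\<lambda>v. x v * exp (Q v)) has_real_derivative y) (at u) \<and> y \<le> 0" by auto
  qed
  then have "x b * exp (Q b) / exp (Q a) \<le> x a" by (simp add: divide_le_eq)
  then show ?thesis by (simp add: Q_def exp_diff)
qed

lemma amgm:
  fixes a b :: "nat \<Rightarrow> real"
  assumes m: "m \<ge> 1" and a: "\<And>i. i \<in> {1..m} \<Longrightarrow> a i > 0" and b: "\<And>i. i \<in> {1..m} \<Longrightarrow> b i \<ge> 0"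
  shows "real m * ((\<Prod>i\<in>{1..m}. a i) powr (1 / real m) * (\<Prod>i\<in>{1..m}. b i) powr (1 / real m))
         \<le> (\<Sum>i\<in>{1..m}. a i * b i)"
proof -
  have ab: "\<And>i. i \<in> {1..m} \<Longrightarrow> a i * b i \<ge> 0" using a b by (simp add: less_imp_le)
  have "(\<Sum>i\<in>{1..m}. a i * b i / card {1..m}) \<ge> (\<Prod>i\<in>{1..m}. a i * b i) powr (1 / card {1..m})"
    by (rule arith_geom_mean) (use m ab in auto)
  hence "(\<Sum>i\<in>{1..m}. a i * b i) / m \<ge> ((\<Prod>i\<in>{1..m}. a i) * (\<Prod>i\<in>{1..m}. b i)) powr (1 / m)"
    by (simp add: sum_divide_distrib prod.distrib)
  moreover have "((\<Prod>i\<in>{1..m}. a i) * (\<Prod>i\<in>{1..m}. b i)) powr (1 / m) =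
     (\<Prod>i\<in>{1..m}. a i) powr (1 / real m) * (\<Prod>i\<in>{1..m}. b i) powr (1 / real m)"
    using a b by (intro powr_mult prod_nonneg; force simp: less_imp_le)
  ultimately show ?thesis using m by (simp add: field_simps)
qed

lemma final_alg:
  fixes y J :: "nat \<Rightarrow> real"
  assumes m: "m \<ge> 1" and y: "\<And>j. j \<in> {1..m} \<Longrightarrow> y j > 0" and J: "\<And>j. j \<in> {1..m} \<Longrightarrow> J j \<ge> 0"
    and h: "\<And>j. j \<in> {1..m} \<Longrightarrow> real m * ((\<Prod>i\<in>{1..m}. y i) powr (1 / real m) * J j) \<le> y j"
  shows "(\<Prod>j\<in>{1..m}. J j) \<le> 1 / real m ^ m"
proof -
  define X where "X = (\<Prod>i\<in>{1..m}. y i)"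
  have X: "X > 0" unfolding X_def using y by (intro prod_pos) auto
  have "(\<Prod>j\<in>{1..m}. real m * (X powr (1 / real m) * J j)) \<le> (\<Prod>j\<in>{1..m}. y j)"
    by (rule prod_mono) (use h J X m in \<open>auto simp: X_def\<close>)
  moreover have "(\<Prod>j\<in>{1..m}. real m * (X powr (1 / real m) * J j)) = real m ^ m * (X powr (1 / real m)) ^ m * (\<Prod>j\<in>{1..m}. J j)"
    by (simp add: prod.distrib)
  moreover have "(X powr (1 / real m)) ^ m = X"
    using X m by (simp add: powr_realpow[symmetric] powr_powr)
  ultimately have "real m ^ m * X * (\<Prod>j\<in>{1..m}. J j) \<le> X" by (simp add: X_def)
  hence "X * (real m ^ m * (\<Prod>j\<in>{1..m}. J j)) \<le> X * 1" by (simp add: algebra_simps)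
  hence "real m ^ m * (\<Prod>j\<in>{1..m}. J j) \<le> 1" using X by (simp add: mult_le_cancel_left_pos)
  thus ?thesis using m by (simp add: field_simps)
qed

lemma pos_contra:
  fixes m :: nat and t0 :: real
    and p tau sg :: "nat \<Rightarrow> real \<Rightarrow> real"
  assumes m: "m \<ge> 1"
    and p_cont: "\<And>i. i \<in> {1..m} \<Longrightarrow> continuous_on {t0..} (p i)"
    and p_nonneg: "\<And>i t. i \<in> {1..m} \<Longrightarrow> t \<ge> t0 \<Longrightarrow> p i t \<ge> 0"
    and tau_cont: "\<And>i. i \<in> {1..m} \<Longrightarrow> continuous_on {t0..} (tau i)"
    and tau_le: "\<And>i t. i \<in> {1..m} \<Longrightarrow> t \<ge> t0 \<Longrightarrow> tau i t \<le> t"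
    and tau_lim: "\<And>i. i \<in> {1..m} \<Longrightarrow> filterlim (tau i) at_top at_top"
    and sg_mono: "\<And>i. i \<in> {1..m} \<Longrightarrow> mono_on {t0..} (sg i)"
    and tau_sg: "\<And>i t. i \<in> {1..m} \<Longrightarrow> t \<ge> t0 \<Longrightarrow> tau i t \<le> sg i t"
    and sg_le: "\<And>i t. i \<in> {1..m} \<Longrightarrow> t \<ge> t0 \<Longrightarrow> sg i t \<le> t"
    and cond: "Limsup at_top (\<lambda>t. ereal (\<Prod>j\<in>{1..m}.
                 (\<Prod>i\<in>{1..m}. I_ij m p tau sg i j t) powr (1 / real m)))
               > ereal (1 / real m ^ m)"
    and sol: "is_solution m t0 p tau x T0"
    and pos: "\<And>t. t \<ge> T1 \<Longrightarrow> x t > 0"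
  shows False
proof -
  define Ti where "Ti = tau_inv m t0 tau T0"
  from sol obtain x' where dw: "\<And>t. t \<ge> Ti \<Longrightarrow> (x has_real_derivative x' t) (at t within {Ti..})"
    and eq: "\<And>t. t \<ge> Ti \<Longrightarrow> x' t + (\<Sum>i\<in>{1..m}. p i t * x (tau i t)) = 0"
    unfolding is_solution_def Ti_def by blast
  have d: "(x has_real_derivative x' t) (at t)" if t: "t > Ti" for t
  proof -
    have "(x has_real_derivative x' t) (at t within {Ti<..})"
      using dw[of t] t by (auto intro: DERIV_subset)
    moreover have "at t within {Ti<..} = at t" using t by (intro at_within_open) auto
    ultimately show ?thesis by simp
  qed
  have x'eq: "x' t = - (\<Sum>i\<in>{1..m}. p i t * x (tau i t))" if "t \<ge> Ti" for t
    using eq[OF that] by linarith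
  have ev: "\<exists>N. \<forall>t\<ge>N. \<forall>i\<in>{1..m}. tau i t \<ge> K" for K
  proof -
    have "eventually (\<lambda>t. \<forall>i\<in>{1..m}. tau i t \<ge> K) at_top"
      by (rule eventually_ball_finite) (use tau_lim in \<open>auto simp: filterlim_at_top\<close>)
    thus ?thesis by (simp add: eventually_at_top_linorder)
  qed
  define A where "A = max (max T1 t0) Ti + 1"
  obtain B0 where B0: "\<forall>t\<ge>B0. \<forall>i\<in>{1..m}. tau i t \<ge> A" using ev by blast
  define B where "B = max B0 A"
  obtain C0 where C0: "\<forall>t\<ge>C0. \<forall>i\<in>{1..m}. tau i t \<ge> B" using ev by blast
  define C where "C = max C0 (B + 1)"
  obtain D0 where D0: "\<forall>t\<ge>D0. \<forall>i\<in>{1..m}. tau i t \<ge> C" using ev by blast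
  define D where "D = max D0 (C + 1)"
  obtain E0 where E0: "\<forall>t\<ge>E0. \<forall>i\<in>{1..m}. tau i t \<ge> D + 1" using ev by blast
  define E where "E = max E0 (D + 1)"
  obtain F0 where F0: "\<forall>t\<ge>F0. \<forall>i\<in>{1..m}. tau i t \<ge> E" using ev by blast
  define Fth where "Fth = max F0 E"
  have hA: "x u > 0" "u > Ti" "u > t0" if "u \<ge> A" for u
    using that pos[of u] by (auto simp: A_def)
  have ord: "A \<le> B" "B + 1 \<le> C" "C + 1 \<le> D" "D + 1 \<le> E" "E \<le> Fth"
    by (auto simp: B_def C_def D_def E_def Fth_def)
  have tauB: "tau i u \<ge> A" if "u \<ge> B" "i \<in> {1..m}" for u i using B0 that by (auto simp: B_def)
  have tauC: "tau i u \<ge> B" if "u \<ge> C" "i \<in> {1..m}" for u i using C0 that by (auto simp: C_def)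
  have tauD: "tau i u \<ge> C" if "u \<ge> D" "i \<in> {1..m}" for u i using D0 that by (auto simp: D_def)
  have tauE: "tau i u \<ge> D + 1" if "u \<ge> E" "i \<in> {1..m}" for u i using E0 that by (auto simp: E_def)
  have tauF: "tau i u \<ge> E" if "u \<ge> Fth" "i \<in> {1..m}" for u i using F0 that by (auto simp: Fth_def)
  have xd: "x' u \<le> 0" if u: "u \<ge> B" for u
  proof -
    have "0 \<le> (\<Sum>i\<in>{1..m}. p i u * x (tau i u))"
    proof (intro sum_nonneg mult_nonneg_nonneg)
      fix i assume i: "i \<in> {1..m}"
      show "0 \<le> p i u" using p_nonneg[OF i, of u] u ord hA[of u] by auto
      show "0 \<le> x (tau i u)" using hA[of "tau i u"] tauB[OF u i] by auto
    qed
    thus ?thesis using x'eq[of u] hA[of u] u ord by auto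
  qed
  have xmono: "x b \<le> x a" if "B \<le> a" "a \<le> b" for a b
  proof (rule DERIV_nonpos_imp_nonincreasing[OF that(2)])
    fix v assume "a \<le> v" "v \<le> b"
    then show "\<exists>y. (x has_real_derivative y) (at v) \<and> y \<le> 0"
      using that ord hA[of v] d[of v] xd[of v] by auto
  qed
  define S where "S = (\<lambda>u. \<Sum>l\<in>{1..m}. p l u)"
  have Scont: "continuous_on {t0..} S" unfolding S_def by (intro continuous_on_sum p_cont) auto
  define F where "F = (\<lambda>v. integral {t0..v} S)"
  have xdC: "x' u \<le> - S u * x u" if u: "u \<ge> C" for u
  proof -
    have "(\<Sum>i\<in>{1..m}. p i u * x u) \<le> (\<Sum>i\<in>{1..m}. p i u * x (tau i u))"
    proof (intro sum_mono mult_left_mono)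
      fix i assume i: "i \<in> {1..m}"
      show "x u \<le> x (tau i u)" using xmono[of "tau i u" u] tauC[OF u i] tau_le[OF i, of u] u ord hA[of u] by auto
      show "0 \<le> p i u" using p_nonneg[OF i, of u] u ord hA[of u] by auto
    qed
    moreover have "S u * x u = (\<Sum>i\<in>{1..m}. p i u * x u)" by (simp add: S_def sum_distrib_right)
    ultimately show ?thesis using x'eq[of u] hA[of u] u ord by auto
  qed
  have expF: "x b * exp (F b - F a) \<le> x a" if "C \<le> a" "a \<le> b" for a b
    unfolding F_def
  proof (rule L_exp[OF _ that(2) _ _ Scont])
    show "t0 < a" using that ord hA[of A] by auto
    fix u assume "a \<le> u" "u \<le> b"
    then show "(x has_real_derivative x' u) (at u)" "x' u \<le> - S u * x u"
      using that ord hA[of u] d[of u] xdC[of u] by auto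
  qed
  define P where "P = (\<lambda>\<xi>. \<Sum>k\<in>{1..m}. p k \<xi> * exp (oint (tau k \<xi>) \<xi> S))"
  have Fder: "(F has_real_derivative S u) (at u)" if "u > t0" for u
    unfolding F_def by (rule indef_deriv[OF Scont that])
  have Fcont: "continuous_on {C..} F"
  proof (intro continuous_at_imp_continuous_on ballI)
    fix u assume "u \<in> {C..}"
    then have "u > t0" using ord hA[of A] by auto
    then show "isCont F u" by (rule DERIV_isCont[OF Fder])
  qed
  have PF: "P \<xi> = (\<Sum>k\<in>{1..m}. p k \<xi> * exp (F \<xi> - F (tau k \<xi>)))" if "\<xi> \<ge> D" for \<xi>
    unfolding P_def F_def
    using that ord hA[of A] tauD[OF that] by (intro sum.cong refl arg_cong2[where f="(*)"] arg_cong[where f=exp] oint_diff[OF Scont]) force+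
  have Pcont: "continuous_on {D..} P"
  proof (rule continuous_on_eq[where f="\<lambda>\<xi>. \<Sum>k\<in>{1..m}. p k \<xi> * exp (F \<xi> - F (tau k \<xi>))"])
    show "(\<Sum>k\<in>{1..m}. p k \<xi> * exp (F \<xi> - F (tau k \<xi>))) = P \<xi>" if "\<xi> \<in> {D..}" for \<xi> using PF that by auto
    have sub: "{D..} \<subseteq> {t0..}" "{D..} \<subseteq> {C..}" using ord hA[of A] by auto
    show "continuous_on {D..} (\<lambda>\<xi>. \<Sum>k\<in>{1..m}. p k \<xi> * exp (F \<xi> - F (tau k \<xi>)))"
    proof (intro continuous_on_sum continuous_on_mult continuous_on_exp continuous_on_diff)
      fix k assume k: "k \<in> {1..m}"
      show "continuous_on {D..} (p k)" by (rule continuous_on_subset[OF p_cont[OF k] sub(1)])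
      show "continuous_on {D..} F" by (rule continuous_on_subset[OF Fcont sub(2)])
      show "continuous_on {D..} (\<lambda>\<xi>. F (tau k \<xi>))"
        by (rule continuous_on_compose2[OF Fcont continuous_on_subset[OF tau_cont[OF k] sub(1)]])
           (use tauD k in auto)
    qed
  qed
  have xdD: "x' u \<le> - P u * x u" if u: "u \<ge> D" for u
  proof -
    have "(\<Sum>k\<in>{1..m}. p k u * (x u * exp (F u - F (tau k u)))) \<le> (\<Sum>k\<in>{1..m}. p k u * x (tau k u))"
    proof (intro sum_mono mult_left_mono)
      fix i assume i: "i \<in> {1..m}"
      show "x u * exp (F u - F (tau i u)) \<le> x (tau i u)"
        using expF[of "tau i u" u] tauD[OF u i] tau_le[OF i, of u] u ord hA[of u] by auto
      show "0 \<le> p i u" using p_nonneg[OF i, of u] u ord hA[of u] by auto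
    qed
    moreover have "P u * x u = (\<Sum>k\<in>{1..m}. p k u * (x u * exp (F u - F (tau k u))))"
      by (simp add: PF[OF u] sum_distrib_right sum_distrib_left algebra_simps)
    ultimately show ?thesis using x'eq[of u] hA[of u] u ord by auto
  qed
  define G where "G = (\<lambda>v. integral {D..v} P)"
  have expG: "x b * exp (G b - G a) \<le> x a" if "D + 1 \<le> a" "a \<le> b" for a b
    unfolding G_def
  proof (rule L_exp[OF _ that(2) _ _ Pcont])
    show "D < a" using that by auto
    fix u assume "a \<le> u" "u \<le> b"
    then show "(x has_real_derivative x' u) (at u)" "x' u \<le> - P u * x u"
      using that ord hA[of u] d[of u] xdD[of u] by auto
  qed
  have Gder: "(G has_real_derivative P u) (at u)" if "u > D" for u
    unfolding G_def by (rule indef_deriv[OF Pcont that])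
  have Gcont: "continuous_on {D+1..} G"
  proof (intro continuous_at_imp_continuous_on ballI)
    fix u assume "u \<in> {D+1..}"
    then have "u > D" by auto
    then show "isCont G u" by (rule DERIV_isCont[OF Gder])
  qed
  have main: "(\<Prod>j\<in>{1..m}. (\<Prod>i\<in>{1..m}. I_ij m p tau sg i j t) powr (1 / real m)) \<le> 1 / real m ^ m"
    if t: "t \<ge> Fth" for t
  proof -
    have tt0: "t \<ge> t0" using t ord hA[of A] by auto
    have sgE: "sg i t \<ge> E" if i: "i \<in> {1..m}" for i
      using tau_sg[OF i tt0] tauF[OF t i] by auto
    have sgt: "sg i t \<le> t" if i: "i \<in> {1..m}" for i using sg_le[OF i tt0] .
    define q where "q = (\<lambda>i s. p i s * exp (oint (tau i s) (sg i t) P))"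
    have Iq: "I_ij m p tau sg i j t = integral {sg j t..t} (q i)" if j: "j \<in> {1..m}" for i j
    proof -
      have "I_ij m p tau sg i j t = oint (sg j t) t (q i)" by (simp add: I_ij_def q_def P_def S_def)
      thus ?thesis using sgt[OF j] by (simp add: oint_def)
    qed
    have sE: "s \<ge> E" "tau i s \<ge> D + 1" "tau i s \<le> sg i t" "s \<ge> t0"
      if j: "j \<in> {1..m}" and i: "i \<in> {1..m}" and s: "s \<in> {sg j t..t}" for i j s
    proof -
      show "s \<ge> E" using sgE[OF j] s by auto
      then show "tau i s \<ge> D + 1" using tauE[OF _ i] by auto
      show st0: "s \<ge> t0" using \<open>s \<ge> E\<close> ord hA[of A] by auto
      have "sg i s \<le> sg i t" using sg_mono[OF i] st0 tt0 s by (auto elim: mono_onD)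
      then show "tau i s \<le> sg i t" using tau_sg[OF i st0] by auto
    qed
    have qG: "q i s = p i s * exp (G (sg i t) - G (tau i s))"
      if j: "j \<in> {1..m}" and i: "i \<in> {1..m}" and s: "s \<in> {sg j t..t}" for i j s
      unfolding q_def G_def using sE[OF j i s] sgE[OF i] ord
      by (subst oint_diff[OF Pcont]) auto
    have qcont: "continuous_on {sg j t..t} (q i)" if j: "j \<in> {1..m}" and i: "i \<in> {1..m}" for i j
    proof (rule continuous_on_eq[where f="\<lambda>s. p i s * exp (G (sg i t) - G (tau i s))"])
      show "p i s * exp (G (sg i t) - G (tau i s)) = q i s" if "s \<in> {sg j t..t}" for s
        using qG[OF j i that] by simp
      have sub: "{sg j t..t} \<subseteq> {t0..}" using sE[OF j i] by auto
      show "continuous_on {sg j t..t} (\<lambda>s. p i s * exp (G (sg i t) - G (tau i s)))"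
      proof (intro continuous_on_mult continuous_on_exp continuous_on_diff continuous_on_const)
        show "continuous_on {sg j t..t} (p i)" by (rule continuous_on_subset[OF p_cont[OF i] sub])
        show "continuous_on {sg j t..t} (\<lambda>s. G (tau i s))"
          by (rule continuous_on_compose2[OF Gcont continuous_on_subset[OF tau_cont[OF i] sub]])
             (use sE[OF j i] in auto)
      qed
    qed
    have qint: "(q i has_integral I_ij m p tau sg i j t) {sg j t..t}" if j: "j \<in> {1..m}" and i: "i \<in> {1..m}" for i j
      unfolding Iq[OF j] using qcont[OF j i] by (intro integrable_integral integrable_continuous_interval)
    have Inn: "I_ij m p tau sg i j t \<ge> 0" if j: "j \<in> {1..m}" and i: "i \<in> {1..m}" for i j
      unfolding Iq[OF j]
    proof (rule integral_nonneg)
      show "q i integrable_on {sg j t..t}" using qcont[OF j i] by (rule integrable_continuous_interval)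
      fix s assume "s \<in> {sg j t..t}"
      then show "0 \<le> q i s" using p_nonneg[OF i, of s] sE[OF j i] unfolding q_def by auto
    qed
    have xsg: "x (sg i t) > 0" if i: "i \<in> {1..m}" for i using hA[of "sg i t"] sgE[OF i] ord by auto
    have key: "(\<Sum>i\<in>{1..m}. x (sg i t) * I_ij m p tau sg i j t) \<le> x (sg j t)" if j: "j \<in> {1..m}" for j
    proof -
      have ftc: "(x' has_integral x t - x (sg j t)) {sg j t..t}"
      proof (rule fundamental_theorem_of_calculus[OF sgt[OF j]])
        fix s assume s: "s \<in> {sg j t..t}"
        then have "s > Ti" using sgE[OF j] ord hA[of s] by auto
        then show "(x has_vector_derivative x' s) (at s within {sg j t..t})"
          using d[of s] by (simp add: has_real_derivative_iff_has_vector_derivative[symmetric] has_field_derivative_at_within)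
      qed
      then have ftc': "((\<lambda>s. - x' s) has_integral x (sg j t) - x t) {sg j t..t}"
        using has_integral_neg[OF ftc] by simp
      have sumint: "((\<lambda>s. \<Sum>i\<in>{1..m}. x (sg i t) * q i s) has_integral (\<Sum>i\<in>{1..m}. x (sg i t) * I_ij m p tau sg i j t)) {sg j t..t}"
        using qint[OF j] by (intro has_integral_sum has_integral_mult_right) auto
      have "(\<Sum>i\<in>{1..m}. x (sg i t) * I_ij m p tau sg i j t) \<le> x (sg j t) - x t"
      proof (rule has_integral_le[OF sumint ftc'])
        fix s assume s: "s \<in> {sg j t..t}"
        have sTi: "s \<ge> Ti" using sgE[OF j] s ord hA[of s] by auto
        have "(\<Sum>i\<in>{1..m}. x (sg i t) * q i s) \<le> (\<Sum>i\<in>{1..m}. p i s * x (tau i s))"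
        proof (rule sum_mono)
          fix i assume i: "i \<in> {1..m}"
          have "x (sg i t) * exp (G (sg i t) - G (tau i s)) \<le> x (tau i s)"
            using expG[of "tau i s" "sg i t"] sE[OF j i s] by auto
          then have "p i s * (x (sg i t) * exp (G (sg i t) - G (tau i s))) \<le> p i s * x (tau i s)"
            using p_nonneg[OF i, of s] sE[OF j i s] by (intro mult_left_mono) auto
          then show "x (sg i t) * q i s \<le> p i s * x (tau i s)"
            using qG[OF j i s] by (simp add: algebra_simps)
        qed
        then show "(\<Sum>i\<in>{1..m}. x (sg i t) * q i s) \<le> - x' s" using x'eq[OF sTi] by simp
      qed
      moreover have "x t > 0" using hA[of t] t ord by auto
      ultimately show ?thesis by simp
    qed
    show ?thesis
    proof (rule final_alg[OF m])
      show "0 < x (sg i t)" if "i \<in> {1..m}" for i using xsg that .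
      show "0 \<le> (\<Prod>i\<in>{1..m}. I_ij m p tau sg i j t) powr (1 / real m)" for j by simp
      fix j assume j: "j \<in> {1..m}"
      have "real m * ((\<Prod>i\<in>{1..m}. x (sg i t)) powr (1 / real m) * (\<Prod>i\<in>{1..m}. I_ij m p tau sg i j t) powr (1 / real m))
         \<le> (\<Sum>i\<in>{1..m}. x (sg i t) * I_ij m p tau sg i j t)"
        by (rule amgm[OF m]) (use xsg Inn[OF j] in auto)
      then show "real m * ((\<Prod>i\<in>{1..m}. x (sg i t)) powr (1 / real m) * (\<Prod>i\<in>{1..m}. I_ij m p tau sg i j t) powr (1 / real m))
         \<le> x (sg j t)" using key[OF j] by linarith
    qed
  qed
  have "Limsup at_top (\<lambda>t. ereal (\<Prod>j\<in>{1..m}.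
                 (\<Prod>i\<in>{1..m}. I_ij m p tau sg i j t) powr (1 / real m))) \<le> ereal (1 / real m ^ m)"
    by (rule Limsup_bounded) (use main in \<open>auto simp: eventually_at_top_linorder\<close>)
  with cond show False by simp
qed

lemma sol_neg:
  assumes "is_solution m t0 p tau x T0"
  shows "is_solution m t0 p tau (\<lambda>t. - x t) T0"
proof -
  from assms obtain x' where h: "T0 \<ge> t0" "continuous_on {T0..} x"
    "continuous_on {tau_inv m t0 tau T0..} x'"
    "\<And>t. t \<ge> tau_inv m t0 tau T0 \<Longrightarrow> (x has_real_derivative x' t) (at t within {tau_inv m t0 tau T0..}) \<and>
            x' t + (\<Sum>i\<in>{1..m}. p i t * x (tau i t)) = 0"
    unfolding is_solution_def by blast
  show ?thesis unfolding is_solution_def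
  proof (intro conjI exI[of _ "\<lambda>t. - x' t"] allI impI)
    show "T0 \<ge> t0" by fact
    show "continuous_on {T0..} (\<lambda>t. - x t)" using h(2) by (intro continuous_intros)
    show "continuous_on {tau_inv m t0 tau T0..} (\<lambda>t. - x' t)" using h(3) by (intro continuous_intros)
    fix t assume t: "tau_inv m t0 tau T0 \<le> t"
    show "((\<lambda>t. - x t) has_real_derivative - x' t) (at t within {tau_inv m t0 tau T0..})"
      using h(4)[OF t] by (intro derivative_intros) auto
    have "- x' t + (\<Sum>i\<in>{1..m}. p i t * - x (tau i t)) = - (x' t + (\<Sum>i\<in>{1..m}. p i t * x (tau i t)))"
      by (simp add: sum_negf)
    then show "- x' t + (\<Sum>i\<in>{1..m}. p i t * - x (tau i t)) = 0" using h(4)[OF t] by simp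
  qed
qed

lemma sign_const:
  fixes x :: "real \<Rightarrow> real"
  assumes c: "continuous_on {T0..} x" and nz: "\<And>t. t \<ge> T \<Longrightarrow> x t \<noteq> 0"
  shows "\<exists>T1. (\<forall>t\<ge>T1. x t > 0) \<or> (\<forall>t\<ge>T1. - x t > 0)"
proof -
  define T1 where "T1 = max T T0"
  have ivt: False if th: "t \<ge> T1" "s \<ge> T1" "x t < 0" "x s > 0" for t s
  proof -
    have ct: "continuous_on {t..s} x" "continuous_on {s..t} x"
      using th by (auto simp: T1_def intro!: continuous_on_subset[OF c])
    show False
  proof (cases "t \<le> s")
    case True
    obtain z where "t \<le> z" "z \<le> s" "x z = 0"
      using IVT'[of x t 0 s] th True ct by auto
    then show False using nz[of z] th by (auto simp: T1_def)
  next
    case False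
    obtain z where "s \<le> z" "z \<le> t" "x z = 0"
      using IVT2'[of x t 0 s] th False ct by auto
    then show False using nz[of z] th by (auto simp: T1_def)
  qed
  qed
  have "(\<forall>t\<ge>T1. x t > 0) \<or> (\<forall>t\<ge>T1. - x t > 0)"
    using ivt nz by (force simp: T1_def)
  then show ?thesis by blast
qed

theorem theorem3p1:
  fixes m :: nat and t0 :: real
    and p tau sg :: "nat \<Rightarrow> real \<Rightarrow> real"
  assumes m: "m \<ge> 1"
    and p_cont: "\<And>i. i \<in> {1..m} \<Longrightarrow> continuous_on {t0..} (p i)"
    and p_nonneg: "\<And>i t. i \<in> {1..m} \<Longrightarrow> t \<ge> t0 \<Longrightarrow> p i t \<ge> 0"
    and tau_cont: "\<And>i. i \<in> {1..m} \<Longrightarrow> continuous_on {t0..} (tau i)"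
    and tau_nonneg: "\<And>i t. i \<in> {1..m} \<Longrightarrow> t \<ge> t0 \<Longrightarrow> tau i t \<ge> 0"
    and tau_le: "\<And>i t. i \<in> {1..m} \<Longrightarrow> t \<ge> t0 \<Longrightarrow> tau i t \<le> t"
    and tau_lim: "\<And>i. i \<in> {1..m} \<Longrightarrow> filterlim (tau i) at_top at_top"
    and sg_cont: "\<And>i. i \<in> {1..m} \<Longrightarrow> continuous_on {t0..} (sg i)"
    and sg_mono: "\<And>i. i \<in> {1..m} \<Longrightarrow> mono_on {t0..} (sg i)"
    and tau_sg: "\<And>i t. i \<in> {1..m} \<Longrightarrow> t \<ge> t0 \<Longrightarrow> tau i t \<le> sg i t"
    and sg_le: "\<And>i t. i \<in> {1..m} \<Longrightarrow> t \<ge> t0 \<Longrightarrow> sg i t \<le> t"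
    and cond: "Limsup at_top (\<lambda>t. ereal (\<Prod>j\<in>{1..m}.
                 (\<Prod>i\<in>{1..m}. I_ij m p tau sg i j t) powr (1 / real m)))
               > ereal (1 / real m ^ m)"
  shows "\<forall>x T0. is_solution m t0 p tau x T0 \<longrightarrow> oscillatory x"
proof (intro allI impI)
  fix x T0 assume sol: "is_solution m t0 p tau x T0"
  show "oscillatory x"
  proof (rule ccontr)
    assume "\<not> oscillatory x"
    then obtain T where nz: "\<And>t. t \<ge> T \<Longrightarrow> x t \<noteq> 0" unfolding oscillatory_def by auto
    have c: "continuous_on {T0..} x" using sol unfolding is_solution_def by blast
    obtain T1 where "(\<forall>t\<ge>T1. x t > 0) \<or> (\<forall>t\<ge>T1. - x t > 0)" using sign_const[OF c nz] by blast
    then show False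
    proof
      assume "\<forall>t\<ge>T1. x t > 0"
      then show False
        by (intro pos_contra[OF m p_cont p_nonneg tau_cont tau_le tau_lim sg_mono tau_sg sg_le cond sol]) auto
    next
      assume "\<forall>t\<ge>T1. - x t > 0"
      then show False
        by (intro pos_contra[OF m p_cont p_nonneg tau_cont tau_le tau_lim sg_mono tau_sg sg_le cond sol_neg[OF sol]]) auto
    qed
  qed
qed

end
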